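(* (Completeness of IML1.) Let $\Gamma$ be an IML1-theory and $\varphi$ a formula with $\varphi\notin\Gamma$. Then there exist an nIML1-model $\langle W,\mathcal{N},V\rangle$ and a world $v\in W$ such that $v\Vdash\psi$ for every $\psi\in\Gamma$ and $v\nVdash\varphi$.
   Context: Formulas are built from a denumerable set $PV$ of propositional variables and $\bot$ using $\land,\lor,\rightarrow$ and unary $\Delta$; $\lnot\varphi$ abbreviates $\varphi\rightarrow\bot$. The axioms of IML1 are all instances of the axiom schemes of intuitionistic propositional calculus (in this language), of K: $\Delta(\varphi\rightarrow\psi)\rightarrow(\Delta\varphi\rightarrow\Delta\psi)$ and of T: $\Delta\varphi\rightarrow\varphi$. An IML1-theory is a set of formulas containing all axioms and closed under modus ponens and under RN (if $\varphi$ is in the set then so is $\Delta\varphi$). An nIML1-frame is a pair $\langle W,\mathcal{N}\rangle$, $W\neq\emptyset$, $\mathcal{N}:W\to P(P(W))$, such that for all $w$: (a) $w\in\bigcap\mathcal{N}_w$; (b) $\bigcap\mathcal{N}_w\in\mathcal{N}_w$; (c) $u\in\bigcap\mathcal{N}_w\Rightarrow\bigcap\mathcal{N}_u\subseteq\bigcap\mathcal{N}_w$; (d) $\bigcap\mathcal{N}_w\subseteq X\subseteq\bigcup\mathcal{N}_w\Rightarrow X\in\mathcal{N}_w$; (e) $u\in\bigcap\mathcal{N}_w\Rightarrow\bigcup\mathcal{N}_u\subseteq\bigcup\mathcal{N}_w$ ($\bigcap\mathcal{N}_w$, $\bigcup\mathcal{N}_w$ being the intersection and union of the family $\mathcal{N}_w$).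 An nIML1-model adds $V:PV\to P(W)$ with $w\in V(q)\Rightarrow\bigcap\mathcal{N}_w\subseteq V(q)$. Forcing: $w\Vdash q$ iff $w\in V(q)$; $w\nVdash\bot$; $\land,\lor$ pointwise; $w\Vdash\varphi\rightarrow\psi$ iff every $v\in\bigcap\mathcal{N}_w$ has $v\nVdash\varphi$ or $v\Vdash\psi$; $w\Vdash\Delta\varphi$ iff every $v\in\bigcup\mathcal{N}_w$ has $v\Vdash\varphi$. *)

theory Defs
  imports Main
begin

datatype form =
    Var nat
  | Bot
  | And form form
  | Or form form
  | Imp form form
  | Dlt form

definition Neg :: "form \<Rightarrow> form" where
  "Neg \<phi> = Imp \<phi> Bot"

inductive ipc_axiom :: "form \<Rightarrow> bool" where
  A1: "ipc_axiom (Imp \<phi> (Imp \<psi> \<phi>))"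
| A2: "ipc_axiom (Imp (Imp \<phi> (Imp \<psi> \<chi>)) (Imp (Imp \<phi> \<psi>) (Imp \<phi> \<chi>)))"
| A3: "ipc_axiom (Imp (And \<phi> \<psi>) \<phi>)"
| A4: "ipc_axiom (Imp (And \<phi> \<psi>) \<psi>)"
| A5: "ipc_axiom (Imp \<phi> (Imp \<psi> (And \<phi> \<psi>)))"
| A6: "ipc_axiom (Imp \<phi> (Or \<phi> \<psi>))"
| A7: "ipc_axiom (Imp \<psi> (Or \<phi> \<psi>))"
| A8: "ipc_axiom (Imp (Imp \<phi> \<chi>) (Imp (Imp \<psi> \<chi>) (Imp (Or \<phi> \<psi>) \<chi>)))"
| A9: "ipc_axiom (Imp Bot \<phi>)"

inductive iml1_axiom :: "form \<Rightarrow> bool" where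
  ipc: "ipc_axiom \<phi> \<Longrightarrow> iml1_axiom \<phi>"
| K: "iml1_axiom (Imp (Dlt (Imp \<phi> \<psi>)) (Imp (Dlt \<phi>) (Dlt \<psi>)))"
| T: "iml1_axiom (Imp (Dlt \<phi>) \<phi>)"

definition iml1_theory :: "form set \<Rightarrow> bool" where
  "iml1_theory \<Gamma> \<longleftrightarrow>
     (\<forall>\<phi>. iml1_axiom \<phi> \<longrightarrow> \<phi> \<in> \<Gamma>) \<and>
     (\<forall>\<phi> \<psi>. \<phi> \<in> \<Gamma> \<longrightarrow> Imp \<phi> \<psi> \<in> \<Gamma> \<longrightarrow> \<psi> \<in> \<Gamma>) \<and>
     (\<forall>\<phi>. \<phi> \<in> \<Gamma> \<longrightarrow> Dlt \<phi> \<in> \<Gamma>)"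

definition nIML1_frame :: "'w set \<Rightarrow> ('w \<Rightarrow> 'w set set) \<Rightarrow> bool" where
  "nIML1_frame W N \<longleftrightarrow>
     W \<noteq> {} \<and>
     (\<forall>w\<in>W. N w \<subseteq> Pow W) \<and>
     (\<forall>w\<in>W.
        w \<in> \<Inter>(N w) \<and>
        \<Inter>(N w) \<in> N w \<and>
        (\<forall>u. u \<in> \<Inter>(N w) \<longrightarrow> \<Inter>(N u) \<subseteq> \<Inter>(N w)) \<and>
        (\<forall>X. \<Inter>(N w) \<subseteq> X \<and> X \<subseteq> \<Union>(N w) \<longrightarrow> X \<in> N w) \<and>
        (\<forall>u. u \<in> \<Inter>(N w) \<longrightarrow> \<Union>(N u) \<subseteq> \<Union>(N w)))"

definition nIML1_model :: "'w set \<Rightarrow> ('w \<Rightarrow> 'w set set) \<Rightarrow> (nat \<Rightarrow> 'w set) \<Rightarrow> bool" where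
  "nIML1_model W N V \<longleftrightarrow>
     nIML1_frame W N \<and>
     (\<forall>q. V q \<subseteq> W) \<and>
     (\<forall>q. \<forall>w\<in>W. w \<in> V q \<longrightarrow> \<Inter>(N w) \<subseteq> V q)"

fun forces :: "('w \<Rightarrow> 'w set set) \<Rightarrow> (nat \<Rightarrow> 'w set) \<Rightarrow> 'w \<Rightarrow> form \<Rightarrow> bool" where
  "forces N V w (Var q) \<longleftrightarrow> w \<in> V q"
| "forces N V w Bot \<longleftrightarrow> False"
| "forces N V w (And \<phi> \<psi>) \<longleftrightarrow> forces N V w \<phi> \<and> forces N V w \<psi>"
| "forces N V w (Or \<phi> \<psi>) \<longleftrightarrow> forces N V w \<phi> \<or> forces N V w \<psi>"
| "forces N V w (Imp \<phi> \<psi>) \<longleftrightarrow>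
     (\<forall>v\<in>\<Inter>(N w). \<not> forces N V v \<phi> \<or> forces N V v \<psi>)"
| "forces N V w (Dlt \<phi>) \<longleftrightarrow> (\<forall>v\<in>\<Union>(N w). forces N V v \<phi>)"

end

theory Submission
  imports Defs
begin

inductive_set Lthm :: "form set" where
  ax: "iml1_axiom \<phi> \<Longrightarrow> \<phi> \<in> Lthm"
| mp: "\<phi> \<in> Lthm \<Longrightarrow> Imp \<phi> \<psi> \<in> Lthm \<Longrightarrow> \<psi> \<in> Lthm"
| rn: "\<phi> \<in> Lthm \<Longrightarrow> Dlt \<phi> \<in> Lthm"

definition thy :: "form set \<Rightarrow> bool" where
  "thy T \<longleftrightarrow> Lthm \<subseteq> T \<and> (\<forall>a b. a \<in> T \<longrightarrow> Imp a b \<in> T \<longrightarrow> b \<in> T)"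

definition prm :: "form set \<Rightarrow> bool" where
  "prm T \<longleftrightarrow> (\<forall>a b. Or a b \<in> T \<longrightarrow> a \<in> T \<or> b \<in> T)"

definition Wc :: "form set set" where
  "Wc = {T. thy T \<and> prm T \<and> Bot \<notin> T}"

definition boxes :: "form set \<Rightarrow> form set" where
  "boxes T = {a. Dlt a \<in> T}"

definition Rc :: "form set \<Rightarrow> form set set" where
  "Rc w = {u \<in> Wc. w \<subseteq> u}"

definition Sc :: "form set \<Rightarrow> form set set" where
  "Sc w = {u \<in> Wc. boxes w \<subseteq> u}"

definition Nc :: "form set \<Rightarrow> form set set set" where
  "Nc w = {X. Rc w \<subseteq> X \<and> X \<subseteq> Sc w}"

definition Vc :: "nat \<Rightarrow> form set set" where
  "Vc q = {u \<in> Wc. Var q \<in> u}"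

lemma ax_in: "thy T \<Longrightarrow> iml1_axiom a \<Longrightarrow> a \<in> T"
  unfolding thy_def using Lthm.ax by blast

lemma ipc_in: "thy T \<Longrightarrow> ipc_axiom a \<Longrightarrow> a \<in> T"
  using ax_in iml1_axiom.ipc by blast

lemma mp_in: "thy T \<Longrightarrow> a \<in> T \<Longrightarrow> Imp a b \<in> T \<Longrightarrow> b \<in> T"
  unfolding thy_def by blast

lemma id_L: "Imp a a \<in> Lthm"
proof -
  have 1: "Imp (Imp a (Imp (Imp a a) a)) (Imp (Imp a (Imp a a)) (Imp a a)) \<in> Lthm"
    by (intro Lthm.ax iml1_axiom.ipc ipc_axiom.A2)
  have 2: "Imp a (Imp (Imp a a) a) \<in> Lthm"
    by (intro Lthm.ax iml1_axiom.ipc ipc_axiom.A1)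
  have 3: "Imp a (Imp a a) \<in> Lthm"
    by (intro Lthm.ax iml1_axiom.ipc ipc_axiom.A1)
  show ?thesis using Lthm.mp[OF 3 Lthm.mp[OF 2 1]] .
qed

lemma ext_thy:
  assumes "thy T"
  shows "thy {c. Imp a c \<in> T}" "T \<subseteq> {c. Imp a c \<in> T}" "a \<in> {c. Imp a c \<in> T}"
proof -
  show sub: "T \<subseteq> {c. Imp a c \<in> T}"
  proof
    fix c assume "c \<in> T"
    moreover have "Imp c (Imp a c) \<in> T" using ipc_in[OF assms ipc_axiom.A1] .
    ultimately show "c \<in> {c. Imp a c \<in> T}" using mp_in[OF assms] by blast
  qed
  show "a \<in> {c. Imp a c \<in> T}" using id_L assms unfolding thy_def by blast
  show "thy {c. Imp a c \<in> T}"
    unfolding thy_def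
  proof (intro conjI allI impI)
    show "Lthm \<subseteq> {c. Imp a c \<in> T}" using sub assms unfolding thy_def by blast
  next
    fix c d assume h1: "c \<in> {c. Imp a c \<in> T}" and h2: "Imp c d \<in> {c. Imp a c \<in> T}"
    have "Imp (Imp a (Imp c d)) (Imp (Imp a c) (Imp a d)) \<in> T"
      using ipc_in[OF assms ipc_axiom.A2] .
    then show "d \<in> {c. Imp a c \<in> T}" using h1 h2 mp_in[OF assms] by blast
  qed
qed

lemma lindenbaum:
  assumes T: "thy T" and b: "b \<notin> T"
  shows "\<exists>M. thy M \<and> prm M \<and> T \<subseteq> M \<and> b \<notin> M"
proof -
  define A where "A = {M. thy M \<and> T \<subseteq> M \<and> b \<notin> M}"
  have "\<forall>C\<in>chains A. \<exists>U\<in>A. \<forall>X\<in>C. X \<subseteq> U"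
  proof
    fix C assume C: "C \<in> chains A"
    show "\<exists>U\<in>A. \<forall>X\<in>C. X \<subseteq> U"
    proof (cases "C = {}")
      case True then show ?thesis using T b unfolding A_def by auto
    next
      case False
      have CA: "C \<subseteq> A" using chainsD2[OF C] .
      have "thy (\<Union>C)" unfolding thy_def
      proof (intro conjI allI impI)
        obtain X where "X \<in> C" using False by blast
        then show "Lthm \<subseteq> \<Union>C" using CA unfolding A_def thy_def by blast
      next
        fix x y assume "x \<in> \<Union>C" "Imp x y \<in> \<Union>C"
        then obtain X Y where XY: "X \<in> C" "Y \<in> C" "x \<in> X" "Imp x y \<in> Y" by blast
        have "X \<subseteq> Y \<or> Y \<subseteq> X" using chainsD[OF C XY(1,2)] .
        moreover have "thy X" "thy Y" using XY CA unfolding A_def by auto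
        ultimately show "y \<in> \<Union>C" using XY mp_in by blast
      qed
      moreover have "T \<subseteq> \<Union>C" "b \<notin> \<Union>C" using False CA unfolding A_def by auto
      ultimately show ?thesis unfolding A_def by blast
    qed
  qed
  from Zorn_Lemma2[OF this] obtain M where M: "M \<in> A" and mx: "\<forall>X\<in>A. M \<subseteq> X \<longrightarrow> X = M"
    by blast
  have tM: "thy M" "T \<subseteq> M" "b \<notin> M" using M unfolding A_def by auto
  have key: "Imp c b \<in> M" if "c \<notin> M" for c
  proof (rule ccontr)
    assume "Imp c b \<notin> M"
    then have "{x. Imp c x \<in> M} \<in> A" using ext_thy[OF tM(1), of c] tM unfolding A_def by auto
    then have "{x. Imp c x \<in> M} = M" using mx ext_thy(2)[OF tM(1)] by blast
    then show False using ext_thy(3)[OF tM(1), of c] that by blast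
  qed
  have "prm M" unfolding prm_def
  proof (intro allI impI)
    fix c d assume cd: "Or c d \<in> M"
    show "c \<in> M \<or> d \<in> M"
    proof (rule ccontr)
      assume "\<not> (c \<in> M \<or> d \<in> M)"
      then have "Imp c b \<in> M" "Imp d b \<in> M" using key by auto
      moreover have "Imp (Imp c b) (Imp (Imp d b) (Imp (Or c d) b)) \<in> M"
        using ipc_in[OF tM(1) ipc_axiom.A8] .
      ultimately have "b \<in> M" using cd mp_in[OF tM(1)] by blast
      then show False using tM by blast
    qed
  qed
  then show ?thesis using tM by blast
qed

lemma lind_W:
  assumes "thy T" "b \<notin> T"
  shows "\<exists>M\<in>Wc. T \<subseteq> M \<and> b \<notin> M"
proof -
  obtain M where M: "thy M" "prm M" "T \<subseteq> M" "b \<notin> M" using lindenbaum[OF assms] by blast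
  have "Bot \<notin> M"
  proof
    assume "Bot \<in> M"
    moreover have "Imp Bot b \<in> M" using ipc_in[OF M(1) ipc_axiom.A9] .
    ultimately show False using M mp_in by blast
  qed
  then show ?thesis using M unfolding Wc_def by blast
qed

lemma boxes_thy: "thy T \<Longrightarrow> thy (boxes T)"
  unfolding thy_def boxes_def
proof (intro conjI allI impI)
  assume h: "Lthm \<subseteq> T \<and> (\<forall>a b. a \<in> T \<longrightarrow> Imp a b \<in> T \<longrightarrow> b \<in> T)"
  then show "Lthm \<subseteq> {a. Dlt a \<in> T}" using Lthm.rn by blast
  fix a b assume "a \<in> {a. Dlt a \<in> T}" "Imp a b \<in> {a. Dlt a \<in> T}"
  moreover have "Imp (Dlt (Imp a b)) (Imp (Dlt a) (Dlt b)) \<in> T"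
    using h Lthm.ax[OF iml1_axiom.K] by blast
  ultimately show "b \<in> {a. Dlt a \<in> T}" using h by blast
qed

lemma boxes_sub: "thy T \<Longrightarrow> boxes T \<subseteq> T"
  unfolding boxes_def using ax_in[OF _ iml1_axiom.T] mp_in by blast

lemma RS: "w \<in> Wc \<Longrightarrow> Rc w \<subseteq> Sc w"
  unfolding Rc_def Sc_def Wc_def using boxes_sub by blast

lemma inter_N: "w \<in> Wc \<Longrightarrow> \<Inter>(Nc w) = Rc w"
proof -
  assume w: "w \<in> Wc"
  have "Rc w \<in> Nc w" using RS[OF w] unfolding Nc_def by blast
  then show ?thesis unfolding Nc_def by blast
qed

lemma union_N: "w \<in> Wc \<Longrightarrow> \<Union>(Nc w) = Sc w"
proof -
  assume w: "w \<in> Wc"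
  have "Sc w \<in> Nc w" using RS[OF w] unfolding Nc_def by blast
  then show ?thesis unfolding Nc_def by blast
qed

lemma frame: "nIML1_frame Wc Nc"
proof -
  have ne: "Wc \<noteq> {}"
  proof -
    have "thy Lthm" unfolding thy_def using Lthm.mp by blast
    moreover have "Bot \<notin> Lthm"
    proof -
      have "\<forall>\<phi>\<in>Lthm. \<forall>w::nat. forces (\<lambda>_. {{w}}) (\<lambda>_. {}) w \<phi>"
      proof
        fix \<phi> assume "\<phi> \<in> Lthm"
        then show "\<forall>w::nat. forces (\<lambda>_. {{w}}) (\<lambda>_. {}) w \<phi>"
        proof induct
          case (ax \<phi>) then show ?case
            by (induct rule: iml1_axiom.induct) (auto elim: ipc_axiom.cases)
        qed auto
      qed
      then show ?thesis by fastforce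
    qed
    ultimately show ?thesis using lind_W by blast
  qed
  show ?thesis unfolding nIML1_frame_def
  proof (intro conjI ballI allI impI)
    show "Wc \<noteq> {}" by (rule ne)
  next
    fix w assume w: "w \<in> Wc"
    show "Nc w \<subseteq> Pow Wc" unfolding Nc_def Sc_def by blast
    show "w \<in> \<Inter>(Nc w)" using w inter_N[OF w] unfolding Rc_def by blast
    show "\<Inter>(Nc w) \<in> Nc w" using inter_N[OF w] RS[OF w] unfolding Nc_def by blast
    fix X assume "\<Inter>(Nc w) \<subseteq> X \<and> X \<subseteq> \<Union>(Nc w)"
    then show "X \<in> Nc w" using inter_N[OF w] union_N[OF w] unfolding Nc_def by blast
  next
    fix w u assume w: "w \<in> Wc" and u: "u \<in> \<Inter>(Nc w)"
    then have u': "u \<in> Wc" "w \<subseteq> u" using inter_N[OF w] unfolding Rc_def by auto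
    show "\<Inter>(Nc u) \<subseteq> \<Inter>(Nc w)" using inter_N[OF w] inter_N[OF u'(1)] u'
      unfolding Rc_def by blast
    have "boxes w \<subseteq> boxes u" using u'(2) unfolding boxes_def by blast
    then show "\<Union>(Nc u) \<subseteq> \<Union>(Nc w)" using union_N[OF w] union_N[OF u'(1)]
      unfolding Sc_def by blast
  qed
qed

lemma model: "nIML1_model Wc Nc Vc"
  unfolding nIML1_model_def
proof (intro conjI allI ballI impI)
  show "nIML1_frame Wc Nc" by (rule frame)
  fix q show "Vc q \<subseteq> Wc" unfolding Vc_def by blast
  fix w assume w: "w \<in> Wc" and "w \<in> Vc q"
  then show "\<Inter>(Nc w) \<subseteq> Vc q" unfolding inter_N[OF w] Vc_def Rc_def by blast
qed

lemma truth: "w \<in> Wc \<Longrightarrow> forces Nc Vc w \<psi> \<longleftrightarrow> \<psi> \<in> w"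
proof (induct \<psi> arbitrary: w)
  case (Var x) then show ?case by (simp add: Vc_def)
next
  case Bot then show ?case by (simp add: Wc_def)
next
  case (And a b)
  then have t: "thy w" by (simp add: Wc_def)
  have "And a b \<in> w \<longleftrightarrow> a \<in> w \<and> b \<in> w"
    using ipc_in[OF t ipc_axiom.A3, of a b] ipc_in[OF t ipc_axiom.A4, of a b]
      ipc_in[OF t ipc_axiom.A5, of a b] mp_in[OF t] by blast
  then show ?case using And by simp
next
  case (Or a b)
  then have t: "thy w" "prm w" by (auto simp: Wc_def)
  have "Or a b \<in> w \<longleftrightarrow> a \<in> w \<or> b \<in> w"
    using ipc_in[OF t(1) ipc_axiom.A6, of a b] ipc_in[OF t(1) ipc_axiom.A7, of b a]
      mp_in[OF t(1)] t(2) unfolding prm_def by blast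
  then show ?case using Or by simp
next
  case (Imp a b)
  have w: "w \<in> Wc" by fact
  then have t: "thy w" by (simp add: Wc_def)
  have "forces Nc Vc w (Imp a b) \<longleftrightarrow> (\<forall>v\<in>Rc w. a \<in> v \<longrightarrow> b \<in> v)"
    using inter_N[OF w] Imp(1,2) unfolding Rc_def by auto
  also have "\<dots> \<longleftrightarrow> Imp a b \<in> w"
  proof
    assume h: "\<forall>v\<in>Rc w. a \<in> v \<longrightarrow> b \<in> v"
    show "Imp a b \<in> w"
    proof (rule ccontr)
      assume "Imp a b \<notin> w"
      then obtain M where "M \<in> Wc" "{c. Imp a c \<in> w} \<subseteq> M" "b \<notin> M"
        using lind_W[OF ext_thy(1)[OF t, of a]] by auto
      then show False using h ext_thy(2,3)[OF t, of a] unfolding Rc_def by blast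
    qed
  next
    assume "Imp a b \<in> w"
    then show "\<forall>v\<in>Rc w. a \<in> v \<longrightarrow> b \<in> v" unfolding Rc_def Wc_def using mp_in by blast
  qed
  finally show ?case .
next
  case (Dlt a)
  have w: "w \<in> Wc" by fact
  then have t: "thy w" by (simp add: Wc_def)
  have "forces Nc Vc w (Dlt a) \<longleftrightarrow> (\<forall>v\<in>Sc w. a \<in> v)"
    using union_N[OF w] Dlt(1) unfolding Sc_def by auto
  also have "\<dots> \<longleftrightarrow> Dlt a \<in> w"
  proof
    assume h: "\<forall>v\<in>Sc w. a \<in> v"
    show "Dlt a \<in> w"
    proof (rule ccontr)
      assume "Dlt a \<notin> w"
      then have "a \<notin> boxes w" by (simp add: boxes_def)
      then obtain M where "M \<in> Wc" "boxes w \<subseteq> M" "a \<notin> M"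
        using lind_W[OF boxes_thy[OF t]] by auto
      then show False using h unfolding Sc_def by blast
    qed
  next
    assume "Dlt a \<in> w"
    then show "\<forall>v\<in>Sc w. a \<in> v" unfolding Sc_def boxes_def by blast
  qed
  finally show ?case .
qed

lemma Lthm_sub: "iml1_theory \<Gamma> \<Longrightarrow> Lthm \<subseteq> \<Gamma>"
proof
  fix x assume G: "iml1_theory \<Gamma>" and x: "x \<in> Lthm"
  from x show "x \<in> \<Gamma>"
  proof induct
    case (ax \<phi>) then show ?case using G unfolding iml1_theory_def by blast
  next
    case (mp \<phi> \<psi>) then show ?case using G unfolding iml1_theory_def by blast
  next
    case (rn \<phi>) then show ?case using G unfolding iml1_theory_def by blast
  qed
qed

theorem mainTheorem3:
  fixes \<Gamma> :: "form set" and \<phi> :: form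
  assumes "iml1_theory \<Gamma>" and "\<phi> \<notin> \<Gamma>"
  shows "\<exists>(W :: form set set) N V. nIML1_model W N V \<and>
           (\<exists>v\<in>W. (\<forall>\<psi>\<in>\<Gamma>. forces N V v \<psi>) \<and> \<not> forces N V v \<phi>)"
proof -
  have "thy \<Gamma>" using Lthm_sub[OF assms(1)] assms(1) unfolding thy_def iml1_theory_def by blast
  then obtain M where M: "M \<in> Wc" "\<Gamma> \<subseteq> M" "\<phi> \<notin> M" using lind_W assms(2) by blast
  have "(\<forall>\<psi>\<in>\<Gamma>. forces Nc Vc M \<psi>) \<and> \<not> forces Nc Vc M \<phi>"
  proof
    show "\<forall>\<psi>\<in>\<Gamma>. forces Nc Vc M \<psi>"
    proof
      fix \<psi> assume "\<psi> \<in> \<Gamma>"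
      then show "forces Nc Vc M \<psi>" using truth[OF M(1), of \<psi>] M(2) by blast
    qed
    show "\<not> forces Nc Vc M \<phi>" using truth[OF M(1), of \<phi>] M(3) by blast
  qed
  then show ?thesis using model M(1) by blast
qed

end
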